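(* Let $a>1$ and consider the planar system $$\dot x = x\,(|x|^a-|y|),\qquad \dot y = y\left(\tfrac12 |x|^a-|y|\right).$$ Then the equilibrium $0$ is essentially asymptotically stable.
   Context: For a flow on $\mathbb{R}^n$, $\ell$ denotes Lebesgue measure and $B_\varepsilon(X)$ the $\varepsilon$-neighbourhood of a set $X$. A compact invariant set $X$ is asymptotically stable relative to a set $N\subset\mathbb{R}^n$ if the usual conditions for asymptotic stability hold for initial conditions in the intersection of a neighbourhood of $X$ with $N$: for every neighbourhood $U$ of $X$ there is a neighbourhood $V$ of $X$ such that trajectories starting in $V\cap N$ remain in $U$ for all positive time, and there is a neighbourhood $W$ of $X$ such that trajectories starting in $W\cap N$ have $\omega$-limit set in $X$. $X$ is essentially asymptotically stable (e.a.s.) if it is asymptotically stable relative to some $N$ with $\lim_{\varepsilon\to0}\ell(B_\varepsilon(X)\cap N)/\ell(B_\varepsilon(X))=1$. Here $X=\{0\}$. *)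

theory Defs
  imports "HOL-Analysis.Analysis"
begin

definition fwd_sol :: "('a::real_normed_vector \<Rightarrow> 'a) \<Rightarrow> 'a \<Rightarrow> real set \<Rightarrow> (real \<Rightarrow> 'a) \<Rightarrow> bool" where
  "fwd_sol f p I \<phi> \<longleftrightarrow> \<phi> 0 = p \<and> (\<forall>t\<in>I. (\<phi> has_vector_derivative f (\<phi> t)) (at t within I))"

definition nbhd :: "'a::topological_space set \<Rightarrow> 'a set \<Rightarrow> bool" where
  "nbhd X U \<longleftrightarrow> (\<exists>G. open G \<and> X \<subseteq> G \<and> G \<subseteq> U)"

definition omega_limit :: "(real \<Rightarrow> 'a::topological_space) \<Rightarrow> 'a set" where
  "omega_limit \<phi> = {q. \<exists>s::nat \<Rightarrow> real. filterlim s at_top sequentially \<and> ((\<phi> \<circ> s) \<longlongrightarrow> q) sequentially}"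

definition as_stable_rel :: "('a::real_normed_vector \<Rightarrow> 'a) \<Rightarrow> 'a set \<Rightarrow> 'a set \<Rightarrow> bool" where
  "as_stable_rel f X N \<longleftrightarrow>
     (\<forall>U. nbhd X U \<longrightarrow> (\<exists>V. nbhd X V \<and>
        (\<forall>p\<in>V \<inter> N. \<forall>T\<ge>0. \<forall>\<phi>. fwd_sol f p {0..T} \<phi> \<longrightarrow> \<phi> ` {0..T} \<subseteq> U))) \<and>
     (\<exists>W. nbhd X W \<and> (\<forall>p\<in>W \<inter> N. (\<exists>\<phi>. fwd_sol f p {0..} \<phi>) \<and>
        (\<forall>\<phi>. fwd_sol f p {0..} \<phi> \<longrightarrow> omega_limit \<phi> \<subseteq> X)))"

definition eps_nbhd :: "'a::metric_space set \<Rightarrow> real \<Rightarrow> 'a set" where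
  "eps_nbhd X \<epsilon> = {p. infdist p X < \<epsilon>}"

definition ess_as_stable :: "('a::euclidean_space \<Rightarrow> 'a) \<Rightarrow> 'a set \<Rightarrow> bool" where
  "ess_as_stable f X \<longleftrightarrow> (\<exists>N. N \<in> sets lebesgue \<and> as_stable_rel f X N \<and>
     ((\<lambda>\<epsilon>. measure lebesgue (eps_nbhd X \<epsilon> \<inter> N) / measure lebesgue (eps_nbhd X \<epsilon>)) \<longlongrightarrow> 1) (at_right 0))"

definition sysf :: "real \<Rightarrow> real \<times> real \<Rightarrow> real \<times> real" where
  "sysf a = (\<lambda>(x, y). (x * (\<bar>x\<bar> powr a - \<bar>y\<bar>), y * ((1/2) * \<bar>x\<bar> powr a - \<bar>y\<bar>)))"

end

theory Submission
  imports Defs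
begin


lemma eps0: "eps_nbhd {0::'a::real_normed_vector} e = ball 0 e"
  by (auto simp: eps_nbhd_def dist_commute)

lemma N_open:
  fixes a c :: real assumes "a > 1"
  shows "open {p::real\<times>real. c * \<bar>fst p\<bar> powr a < \<bar>snd p\<bar>}"
proof (rule open_Collect_less)
  show "continuous_on UNIV (\<lambda>p::real\<times>real. c * \<bar>fst p\<bar> powr a)"
    using assms by (intro continuous_intros continuous_on_powr') auto
qed (intro continuous_intros)

lemma measure_part:
  fixes a c :: real assumes a: "a > 1" and c: "c > 0"
  defines "N \<equiv> {p::real\<times>real. c * \<bar>fst p\<bar> powr a < \<bar>snd p\<bar>}"
  shows "N \<in> sets lebesgue"
    and "((\<lambda>e. measure lebesgue (eps_nbhd {0} e \<inter> N) / measure lebesgue (eps_nbhd {0::real\<times>real} e)) \<longlongrightarrow> 1) (at_right 0)"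
proof -
  have oN: "open N" unfolding N_def using N_open[OF a] .
  then have bN: "N \<in> sets borel" by simp
  then show "N \<in> sets lebesgue" by (simp add: sets_completionI_sets)
  have key: "1 - (4*c/pi) * e powr (a - 1) \<le> measure lebesgue (eps_nbhd {0} e \<inter> N) / measure lebesgue (eps_nbhd {0::real\<times>real} e)
      \<and> measure lebesgue (eps_nbhd {0} e \<inter> N) / measure lebesgue (eps_nbhd {0::real\<times>real} e) \<le> 1" if e: "e > 0" for e
  proof -
    define B where "B = ball (0::real\<times>real) e"
    define R where "R = cbox (-e, - (c * e powr a)) (e, c * e powr a)"
    have mB: "measure lebesgue B = pi * e^2"
      using e by (simp add: B_def measure_completion content_ball unit_ball_vol_2 power2_eq_square)
    have mR: "measure lborel R = (2*e) * (2 * (c * e powr a))"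
      using e c by (simp add: R_def content_cbox_cases Basis_prod_def)
    have sub: "B - N \<subseteq> R"
    proof
      fix p assume p: "p \<in> B - N"
      obtain x y where pxy: "p = (x,y)" by force
      have "norm p < e" using p by (simp add: B_def)
      then have xe: "\<bar>x\<bar> < e" and ye: "\<bar>y\<bar> < e" using pxy
        by (auto simp: norm_Pair intro: le_less_trans[OF _ \<open>norm p < e\<close>] real_sqrt_sum_squares_ge1 real_sqrt_sum_squares_ge2)
      have "\<bar>y\<bar> \<le> c * \<bar>x\<bar> powr a" using p pxy by (auto simp: N_def)
      also have "\<dots> \<le> c * e powr a" using xe a c by (intro mult_left_mono powr_mono2) auto
      finally show "p \<in> R" using xe pxy by (auto simp: R_def cbox_Pair_iff)
    qed
    have BNb: "B - N \<in> sets borel" using bN by (simp add: B_def)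
    have mBN: "measure lebesgue (B - N) \<le> measure lborel R"
      using sub BNb by (simp add: measure_completion R_def) (intro measure_mono_fmeasurable; auto)
    have eqi: "B \<inter> N = B - (B - N)" by auto
    have mBN2: "measure lebesgue (B \<inter> N) = measure lebesgue B - measure lebesgue (B - N)"
      unfolding eqi using BNb emeasure_bounded_finite[of "ball (0::real\<times>real) e"] by (intro measure_Diff) (auto simp: B_def)
    have pos: "measure lebesgue B > 0" using mB e by simp
    have nn: "measure lebesgue (B - N) \<ge> 0" by simp
    have "measure lebesgue (B - N) / measure lebesgue B \<le> (4*c/pi) * e powr (a - 1)"
    proof -
      have "measure lebesgue (B - N) / measure lebesgue B \<le> ((2*e) * (2 * (c * e powr a))) / (pi * e^2)"
        unfolding mB[symmetric] using mBN mR pos by (intro divide_right_mono) auto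
      also have "\<dots> = (4*c/pi) * (e powr a / e)" using e by (simp add: power2_eq_square field_simps)
      also have "e powr a / e = e powr (a - 1)" using e by (simp add: powr_diff)
      finally show ?thesis .
    qed
    moreover have "(measure lebesgue B - measure lebesgue (B - N)) / measure lebesgue B
        = 1 - measure lebesgue (B - N) / measure lebesgue B" using pos by (simp add: field_simps)
    moreover have "measure lebesgue (B - N) / measure lebesgue B \<ge> 0" using pos nn by simp
    ultimately have "1 - (4*c/pi) * e powr (a - 1) \<le> (measure lebesgue B - measure lebesgue (B - N)) / measure lebesgue B
      \<and> (measure lebesgue B - measure lebesgue (B - N)) / measure lebesgue B \<le> 1" by linarith
    moreover have ebB: "eps_nbhd {0} e = B" by (simp add: eps0 B_def)
    ultimately show ?thesis by (simp only: ebB mBN2)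
  qed
  have lim: "((\<lambda>e. 1 - (4*c/pi) * e powr (a - 1)) \<longlongrightarrow> 1) (at_right 0)"
  proof -
    have "((\<lambda>e::real. e powr (a - 1)) \<longlongrightarrow> 0) (at_right 0)"
      using a by (intro tendsto_zero_powrI) (auto intro: tendsto_ident_at eventually_at_rightI[of 0 1])
    then have "((\<lambda>e. 1 - (4*c/pi) * e powr (a - 1)) \<longlongrightarrow> 1 - (4*c/pi) * 0) (at_right 0)"
      by (intro tendsto_intros)
    then show ?thesis by simp
  qed
  show "((\<lambda>e. measure lebesgue (eps_nbhd {0} e \<inter> N) / measure lebesgue (eps_nbhd {0::real\<times>real} e)) \<longlongrightarrow> 1) (at_right 0)"
    apply (rule tendsto_sandwich[OF _ _ lim tendsto_const])
    using key by (auto intro: eventually_at_rightI[of 0 1])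
qed


lemma mono_int:
  fixes g g' :: "real \<Rightarrow> real"
  assumes d: "\<And>t. t \<in> {0..T} \<Longrightarrow> (g has_real_derivative g' t) (at t within {0..T})"
    and pos: "\<And>t. s < t \<Longrightarrow> t < b \<Longrightarrow> g' t \<ge> 0" and s: "0 \<le> s" "s \<le> b" "b \<le> T"
  shows "g s \<le> g b"
proof (rule DERIV_nonneg_imp_increasing_open[OF s(2)])
  fix x assume x: "s < x" "x < b"
  have "at x within {0..T} = at x" using x s by (intro at_within_Icc_at) auto
  then have "DERIV g x :> g' x" using d[of x] x s by auto
  then show "\<exists>y. DERIV g x :> y \<and> 0 \<le> y" using pos x by blast
next
  have "continuous_on {0..T} g" unfolding continuous_on_eq_continuous_within
    using d DERIV_continuous by blast
  then show "continuous_on {s..b} g" by (rule continuous_on_subset) (use s in auto)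
qed

lemma mono_int':
  fixes g g' :: "real \<Rightarrow> real"
  assumes d: "\<And>t. t \<in> {0..T} \<Longrightarrow> (g has_real_derivative g' t) (at t within {0..T})"
    and neg: "\<And>t. s < t \<Longrightarrow> t < b \<Longrightarrow> g' t \<le> 0" and s: "0 \<le> s" "s \<le> b" "b \<le> T"
  shows "g b \<le> g s"
proof -
  have "(\<lambda>t. - g t) s \<le> (\<lambda>t. - g t) b"
    by (rule mono_int[where g'="\<lambda>t. - g' t" and T=T]) (use d neg s in \<open>auto intro!: derivative_eq_intros\<close>)
  then show ?thesis by simp
qed

lemma lin_sign:
  fixes u k :: "real \<Rightarrow> real"
  assumes d: "\<And>t. t \<in> {0..T} \<Longrightarrow> (u has_real_derivative u t * k t) (at t within {0..T})"
    and K: "\<And>t. t \<in> {0..T} \<Longrightarrow> \<bar>k t\<bar> \<le> K" and t: "t \<in> {0..T}"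
  shows "u 0 = 0 \<Longrightarrow> u t = 0" and "u 0 \<noteq> 0 \<Longrightarrow> u t \<noteq> 0"
proof -
  assume u0: "u 0 = 0"
  have "(\<lambda>t. (u t)^2 * exp (- 2*K * t)) t \<le> (\<lambda>t. (u t)^2 * exp (- 2*K * t)) 0"
  proof (rule mono_int'[where T=T and g="\<lambda>t. (u t)^2 * exp (- 2*K * t)" and g'="\<lambda>s. (2 * (u s)^2 * exp (- 2*K * s)) * (k s - K)"])
    fix s assume s: "s \<in> {0..T}"
    show "((\<lambda>t. (u t)^2 * exp (- 2*K * t)) has_real_derivative
        (2 * (u s)^2 * exp (- 2*K * s)) * (k s - K)) (at s within {0..T})"
      using d[OF s] by (auto intro!: derivative_eq_intros simp: algebra_simps power2_eq_square)
  next
    fix s assume s: "0 < s" "s < t"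
    then have "k s - K \<le> 0" using K[of s] t by auto
    then show "2 * (u s)^2 * exp (- 2*K * s) * (k s - K) \<le> 0"
      by (intro mult_nonneg_nonpos) auto
  qed (use t in auto)
  then show "u t = 0" using u0 by (simp add: mult_le_0_iff)
next
  assume u0: "u 0 \<noteq> 0"
  have "(\<lambda>t. (u t)^2 * exp (2*K * t)) 0 \<le> (\<lambda>t. (u t)^2 * exp (2*K * t)) t"
  proof (rule mono_int[where T=T and g="\<lambda>t. (u t)^2 * exp (2*K * t)" and g'="\<lambda>s. (2 * (u s)^2 * exp (2*K * s)) * (k s + K)"])
    fix s assume s: "s \<in> {0..T}"
    show "((\<lambda>t. (u t)^2 * exp (2*K * t)) has_real_derivative
        (2 * (u s)^2 * exp (2*K * s)) * (k s + K)) (at s within {0..T})"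
      using d[OF s] by (auto intro!: derivative_eq_intros simp: algebra_simps power2_eq_square)
  next
    fix s assume s: "0 < s" "s < t"
    then have "k s + K \<ge> 0" using K[of s] t by auto
    then show "2 * (u s)^2 * exp (2*K * s) * (k s + K) \<ge> 0"
      by (intro mult_nonneg_nonneg) auto
  qed (use t in auto)
  then show "u t \<noteq> 0" using u0 by auto
qed

lemma barrier:
  fixes g :: "real \<Rightarrow> real"
  assumes cont: "continuous_on {0..T} g" and g0: "g 0 < 0"
    and step: "\<And>t. 0 < t \<Longrightarrow> t \<le> T \<Longrightarrow> (\<forall>s\<in>{0..<t}. g s < 0) \<Longrightarrow> g t < 0"
  shows "\<forall>t\<in>{0..T}. g t < 0"
proof (rule ccontr)
  assume nt: "\<not> ?thesis"
  define S where "S = {0..T} \<inter> g -` {0..}"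
  have ne: "S \<noteq> {}" using nt by (auto simp: S_def not_less)
  have cl: "closed S" unfolding S_def by (rule continuous_closed_preimage[OF cont]) auto
  have bdd: "bdd_below S" by (auto simp: S_def bdd_below_def)
  have iS: "Inf S \<in> S" using closed_contains_Inf[OF ne bdd cl] .
  then have i0: "Inf S \<noteq> 0" using g0 by (auto simp: S_def)
  have iT: "0 \<le> Inf S" "Inf S \<le> T" using iS by (auto simp: S_def)
  have "\<forall>s\<in>{0..<Inf S}. g s < 0"
  proof
    fix s assume s: "s \<in> {0..<Inf S}"
    show "g s < 0"
    proof (rule ccontr)
      assume "\<not> g s < 0"
      then have "s \<in> S" using s iT by (auto simp: S_def)
      then have "Inf S \<le> s" using bdd by (rule cInf_lower)
      then show False using s by auto
    qed
  qed
  then have "g (Inf S) < 0" using step[of "Inf S"] i0 iT by auto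
  then show False using iS by (auto simp: S_def)
qed

lemma comp_deriv:
  assumes "fwd_sol (sysf a) p I \<phi>" "t \<in> I"
  shows "((\<lambda>t. fst (\<phi> t)) has_real_derivative fst (\<phi> t) * (\<bar>fst (\<phi> t)\<bar> powr a - \<bar>snd (\<phi> t)\<bar>)) (at t within I)"
    and "((\<lambda>t. snd (\<phi> t)) has_real_derivative snd (\<phi> t) * ((1/2) * \<bar>fst (\<phi> t)\<bar> powr a - \<bar>snd (\<phi> t)\<bar>)) (at t within I)"
proof -
  have d: "(\<phi> has_vector_derivative sysf a (\<phi> t)) (at t within I)"
    using assms by (auto simp: fwd_sol_def)
  obtain u v where uv: "\<phi> t = (u, v)" by force
  have d2: "(\<phi> has_derivative (\<lambda>h. h *\<^sub>R sysf a (u, v))) (at t within I)"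
    using d uv by (simp add: has_vector_derivative_def)
  have "((\<lambda>t. fst (\<phi> t)) has_derivative (\<lambda>h. fst (h *\<^sub>R sysf a (u, v)))) (at t within I)"
    by (rule has_derivative_fst[OF d2])
  then show "((\<lambda>t. fst (\<phi> t)) has_real_derivative fst (\<phi> t) * (\<bar>fst (\<phi> t)\<bar> powr a - \<bar>snd (\<phi> t)\<bar>)) (at t within I)"
    by (simp add: uv sysf_def has_field_derivative_def mult_commute_abs)
  have "((\<lambda>t. snd (\<phi> t)) has_derivative (\<lambda>h. snd (h *\<^sub>R sysf a (u, v)))) (at t within I)"
    by (rule has_derivative_snd[OF d2])
  then show "((\<lambda>t. snd (\<phi> t)) has_real_derivative snd (\<phi> t) * ((1/2) * \<bar>fst (\<phi> t)\<bar> powr a - \<bar>snd (\<phi> t)\<bar>)) (at t within I)"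
    by (simp add: uv sysf_def has_field_derivative_def mult_commute_abs)
qed

lemma sol_cont:
  assumes "fwd_sol f p I \<phi>"
  shows "continuous_on I \<phi>"
  using assms unfolding fwd_sol_def continuous_on_eq_continuous_within
  using has_vector_derivative_continuous by blast

lemma absb:
  fixes u v U V k :: real
  assumes "0 \<le> u" "u \<le> U" "0 \<le> v" "v \<le> V" "0 \<le> k" "k \<le> 1"
  shows "\<bar>k * u - v\<bar> \<le> U + V"
proof -
  have "k * u \<le> u" using assms by (simp add: mult_left_le_one_le)
  moreover have "0 \<le> k * u" using assms by simp
  ultimately show ?thesis using assms unfolding abs_le_iff by linarith
qed

lemma cge: "1 \<le> c \<Longrightarrow> (u::real) powr a \<le> c * u powr a"
  using mult_right_mono[of 1 c "u powr a"] by simp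

lemma apriori:
  fixes a c T :: real and p :: "real \<times> real"
  assumes a: "a > 1" and c1: "c \<ge> 1" and cc: "a - 1/2 \<le> c * (a - 1)"
    and sol: "fwd_sol (sysf a) p {0..T} \<phi>" and pN: "c * \<bar>fst p\<bar> powr a < \<bar>snd p\<bar>"
    and t: "t \<in> {0..T}"
  shows "c * \<bar>fst (\<phi> t)\<bar> powr a < \<bar>snd (\<phi> t)\<bar> \<and> (fst (\<phi> t))^2 \<le> (fst p)^2
     \<and> (snd (\<phi> t))^2 \<le> (snd p)^2 \<and> 1 / (snd p)^2 + t / \<bar>snd p\<bar> \<le> 1 / (snd (\<phi> t))^2"
proof -
  define x where "x = (\<lambda>t. fst (\<phi> t))"
  define y where "y = (\<lambda>t. snd (\<phi> t))"
  have p0: "\<phi> 0 = p" using sol by (simp add: fwd_sol_def)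
  have x0: "x 0 = fst p" and y0: "y 0 = snd p" by (simp_all add: x_def y_def p0)
  have dx: "\<And>t. t \<in> {0..T} \<Longrightarrow> (x has_real_derivative x t * (\<bar>x t\<bar> powr a - \<bar>y t\<bar>)) (at t within {0..T})"
    unfolding x_def y_def by (rule comp_deriv(1)[OF sol])
  have dy: "\<And>t. t \<in> {0..T} \<Longrightarrow> (y has_real_derivative y t * ((1/2) * \<bar>x t\<bar> powr a - \<bar>y t\<bar>)) (at t within {0..T})"
    unfolding x_def y_def by (rule comp_deriv(2)[OF sol])
  have "compact (\<phi> ` {0..T})" using sol_cont[OF sol] by (intro compact_continuous_image) auto
  then obtain B where B: "\<And>t. t \<in> {0..T} \<Longrightarrow> norm (\<phi> t) \<le> B"
    using compact_imp_bounded bounded_iff by (metis imageI)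
  have xB: "\<bar>x t\<bar> \<le> B" and yB: "\<bar>y t\<bar> \<le> B" if "t \<in> {0..T}" for t
    using B[OF that] norm_fst_le[of "x t" "y t"] norm_snd_le[of "y t" "x t"]
    by (auto simp: x_def y_def)
  have xaB: "\<bar>x t\<bar> powr a \<le> B powr a" if "t \<in> {0..T}" for t
    using xB[OF that] a by (intro powr_mono2) auto
  have Kx: "\<bar>\<bar>x t\<bar> powr a - \<bar>y t\<bar>\<bar> \<le> B powr a + B" if "t \<in> {0..T}" for t
    using absb[of "\<bar>x t\<bar> powr a" "B powr a" "\<bar>y t\<bar>" B 1] xaB[OF that] yB[OF that] by simp
  have Ky: "\<bar>(1/2) * \<bar>x t\<bar> powr a - \<bar>y t\<bar>\<bar> \<le> B powr a + B" if "t \<in> {0..T}" for t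
    using absb[of "\<bar>x t\<bar> powr a" "B powr a" "\<bar>y t\<bar>" B "1/2"] xaB[OF that] yB[OF that] by simp
  have y0nz: "y 0 \<noteq> 0" using pN y0 c1 by (auto simp: mult_less_0_iff)
  have ynz: "y s \<noteq> 0" if "s \<in> {0..T}" for s
    by (rule lin_sign(2)[OF dy Ky that y0nz])
  have inN: "\<forall>s\<in>{0..T}. c * \<bar>x s\<bar> powr a < \<bar>y s\<bar>"
  proof (cases "x 0 = 0")
    case True
    have "x s = 0" if "s \<in> {0..T}" for s by (rule lin_sign(1)[OF dx Kx that True])
    then show ?thesis using ynz by auto
  next
    case False
    have xnz: "x s \<noteq> 0" if "s \<in> {0..T}" for s by (rule lin_sign(2)[OF dx Kx that False])
    define l where "l = (\<lambda>t. ln c + (a/2) * ln ((x t)^2) - (1/2) * ln ((y t)^2))"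
    define l' where "l' = (\<lambda>t. (a - 1/2) * \<bar>x t\<bar> powr a - (a - 1) * \<bar>y t\<bar>)"
    have dl: "(l has_real_derivative l' s) (at s within {0..T})" if s: "s \<in> {0..T}" for s
    proof -
      have "(l has_real_derivative (a/2) * ((2 * x s * (x s * (\<bar>x s\<bar> powr a - \<bar>y s\<bar>))) / (x s)^2)
          - (1/2) * ((2 * y s * (y s * ((1/2) * \<bar>x s\<bar> powr a - \<bar>y s\<bar>))) / (y s)^2)) (at s within {0..T})"
        unfolding l_def using dx[OF s] dy[OF s] xnz[OF s] ynz[OF s]
        by (auto intro!: derivative_eq_intros simp: power2_eq_square zero_less_mult_iff)
      moreover have "(a/2) * ((2 * x s * (x s * (\<bar>x s\<bar> powr a - \<bar>y s\<bar>))) / (x s)^2)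
          - (1/2) * ((2 * y s * (y s * ((1/2) * \<bar>x s\<bar> powr a - \<bar>y s\<bar>))) / (y s)^2) = l' s"
        using xnz[OF s] ynz[OF s] by (simp add: l'_def power2_eq_square field_simps)
      ultimately show ?thesis by simp
    qed
    have lN: "l s < 0 \<longleftrightarrow> c * \<bar>x s\<bar> powr a < \<bar>y s\<bar>" if s: "s \<in> {0..T}" for s
    proof -
      have "ln ((x s)^2) = 2 * ln \<bar>x s\<bar>" "ln ((y s)^2) = 2 * ln \<bar>y s\<bar>"
        by (subst power2_abs[symmetric], subst ln_realpow, simp)+
      then have "l s = ln (c * \<bar>x s\<bar> powr a) - ln \<bar>y s\<bar>"
        using xnz[OF s] c1 by (simp add: l_def ln_mult)
      moreover have "c * \<bar>x s\<bar> powr a > 0" using xnz[OF s] c1 by simp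
      ultimately show ?thesis using ynz[OF s] by simp
    qed
    have lcont: "continuous_on {0..T} l" unfolding continuous_on_eq_continuous_within
      using dl DERIV_continuous by blast
    have "\<forall>s\<in>{0..T}. l s < 0"
    proof (rule barrier[OF lcont])
      show "l 0 < 0" using lN[of 0] pN x0 y0 t by auto
    next
      fix t0 assume t0: "0 < t0" "t0 \<le> T" and less: "\<forall>s\<in>{0..<t0}. l s < 0"
      have "l t0 \<le> l 0"
      proof (rule mono_int'[of T l l' 0 t0])
        fix s assume s: "0 < s" "s < t0"
        then have "c * \<bar>x s\<bar> powr a < \<bar>y s\<bar>" using lN[of s] less t0 by auto
        then have "(a - 1) * (c * \<bar>x s\<bar> powr a) \<le> (a - 1) * \<bar>y s\<bar>" using a by (intro mult_left_mono) auto
        moreover have "(a - 1/2) * \<bar>x s\<bar> powr a \<le> (c * (a - 1)) * \<bar>x s\<bar> powr a"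
          using cc by (intro mult_right_mono) auto
        ultimately show "l' s \<le> 0" by (simp add: l'_def algebra_simps)
      qed (use dl t0 in auto)
      moreover have "l 0 < 0" using lN[of 0] pN x0 y0 t by auto
      ultimately show "l t0 < 0" by simp
    qed
    then show ?thesis using lN by auto
  qed
  have ymono: "(y s)^2 \<le> (y 0)^2" if s: "s \<in> {0..T}" for s
  proof (rule mono_int'[of T "\<lambda>t. (y t)^2" "\<lambda>t. 2 * (y t)^2 * ((1/2) * \<bar>x t\<bar> powr a - \<bar>y t\<bar>)" 0 s])
    fix t assume "t \<in> {0..T}"
    then show "((\<lambda>t. (y t)^2) has_real_derivative 2 * (y t)^2 * ((1/2) * \<bar>x t\<bar> powr a - \<bar>y t\<bar>)) (at t within {0..T})"
      using dy by (auto intro!: derivative_eq_intros simp: power2_eq_square algebra_simps)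
  next
    fix t assume t: "0 < t" "t < s"
    then have "c * \<bar>x t\<bar> powr a < \<bar>y t\<bar>" using inN s by auto
    moreover have "\<bar>x t\<bar> powr a \<le> c * \<bar>x t\<bar> powr a" using c1 by (rule cge)
    ultimately have "(1/2) * \<bar>x t\<bar> powr a - \<bar>y t\<bar> \<le> 0" by simp
    then show "2 * (y t)^2 * ((1/2) * \<bar>x t\<bar> powr a - \<bar>y t\<bar>) \<le> 0"
      by (intro mult_nonneg_nonpos) auto
  qed (use s in auto)
  have xmono: "(x s)^2 \<le> (x 0)^2" if s: "s \<in> {0..T}" for s
  proof (rule mono_int'[of T "\<lambda>t. (x t)^2" "\<lambda>t. 2 * (x t)^2 * (\<bar>x t\<bar> powr a - \<bar>y t\<bar>)" 0 s])
    fix t assume "t \<in> {0..T}"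
    then show "((\<lambda>t. (x t)^2) has_real_derivative 2 * (x t)^2 * (\<bar>x t\<bar> powr a - \<bar>y t\<bar>)) (at t within {0..T})"
      using dx by (auto intro!: derivative_eq_intros simp: power2_eq_square algebra_simps)
  next
    fix t assume t: "0 < t" "t < s"
    then have "c * \<bar>x t\<bar> powr a < \<bar>y t\<bar>" using inN s by auto
    moreover have "\<bar>x t\<bar> powr a \<le> c * \<bar>x t\<bar> powr a" using c1 by (rule cge)
    ultimately have "\<bar>x t\<bar> powr a - \<bar>y t\<bar> \<le> 0" by simp
    then show "2 * (x t)^2 * (\<bar>x t\<bar> powr a - \<bar>y t\<bar>) \<le> 0"
      by (intro mult_nonneg_nonpos) auto
  qed (use s in auto)
  have yinv: "1 / (y 0)^2 + t / \<bar>y 0\<bar> \<le> 1 / (y t)^2"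
  proof -
    have yy: "\<bar>y 0\<bar> / (y 0 * y 0) = 1 / \<bar>y 0\<bar>"
    proof -
      have "y 0 * y 0 = \<bar>y 0\<bar> * \<bar>y 0\<bar>" by simp
      then show ?thesis using y0nz by (simp add: field_simps)
    qed
    have "(\<lambda>t. 1 / (y t)^2 - t / \<bar>y 0\<bar>) 0 \<le> (\<lambda>t. 1 / (y t)^2 - t / \<bar>y 0\<bar>) t"
    proof (rule mono_int[of T _ "\<lambda>t. (2 * \<bar>y t\<bar> - \<bar>x t\<bar> powr a) / (y t)^2 - 1 / \<bar>y 0\<bar>" 0 t])
      fix s assume s: "s \<in> {0..T}"
      have "((\<lambda>t. 1 / (y t)^2 - t / \<bar>y 0\<bar>) has_real_derivative
          - (2 * y s * (y s * ((1/2) * \<bar>x s\<bar> powr a - \<bar>y s\<bar>))) / ((y s)^2)^2 - 1 / \<bar>y 0\<bar>) (at s within {0..T})"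
        using dy[OF s] ynz[OF s] y0nz yy by (auto intro!: derivative_eq_intros simp: power2_eq_square)
      moreover have "- (2 * y s * (y s * ((1/2) * \<bar>x s\<bar> powr a - \<bar>y s\<bar>))) / ((y s)^2)^2
          = (2 * \<bar>y s\<bar> - \<bar>x s\<bar> powr a) / (y s)^2"
        using ynz[OF s] by (simp add: power2_eq_square field_simps)
      ultimately show "((\<lambda>t. 1 / (y t)^2 - t / \<bar>y 0\<bar>) has_real_derivative
          (2 * \<bar>y s\<bar> - \<bar>x s\<bar> powr a) / (y s)^2 - 1 / \<bar>y 0\<bar>) (at s within {0..T})" by simp
    next
      fix s assume s: "0 < s" "s < t"
      then have sT: "s \<in> {0..T}" using t by auto
      have "c * \<bar>x s\<bar> powr a < \<bar>y s\<bar>" using inN sT by auto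
      moreover have "\<bar>x s\<bar> powr a \<le> c * \<bar>x s\<bar> powr a" using c1 by (rule cge)
      ultimately have "\<bar>y s\<bar> \<le> 2 * \<bar>y s\<bar> - \<bar>x s\<bar> powr a" by simp
      then have "\<bar>y s\<bar> / (y s)^2 \<le> (2 * \<bar>y s\<bar> - \<bar>x s\<bar> powr a) / (y s)^2"
        by (intro divide_right_mono) auto
      moreover have "\<bar>y s\<bar> / (y s)^2 = 1 / \<bar>y s\<bar>" using ynz[OF sT]
        by (simp add: power2_eq_square field_simps)
      moreover have "\<bar>y s\<bar> \<le> \<bar>y 0\<bar>" using ymono[OF sT] by (simp add: abs_le_square_iff)
      then have "1 / \<bar>y 0\<bar> \<le> 1 / \<bar>y s\<bar>" using ynz[OF sT] by (intro divide_left_mono) auto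
      ultimately show "(2 * \<bar>y s\<bar> - \<bar>x s\<bar> powr a) / (y s)^2 - 1 / \<bar>y 0\<bar> \<ge> 0" by simp
    qed (use t in auto)
    then show ?thesis by simp
  qed
  show ?thesis using inN t xmono[OF t] ymono[OF t] yinv x0 y0 by (simp add: x_def y_def)
qed



lemma time_change:
  fixes r :: "real \<Rightarrow> real" and r0 :: real
  assumes cont: "continuous_on UNIV r" and pos: "\<And>s. r s > 0"
    and r0: "r0 > 0" and lb: "\<And>s. s \<ge> 0 \<Longrightarrow> r s \<ge> r0"
  shows "\<exists>g. g 0 = 0 \<and> (\<forall>t\<ge>0. g t \<ge> 0 \<and> (g has_real_derivative 1 / r (g t)) (at t))"
proof -
  define R where "R = (\<lambda>s. integral {-1..s} r - integral {-1..0} r)"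
  have dR: "DERIV R s :> r s" if s: "s > -1" for s
  proof -
    have "((\<lambda>x. integral {-1..x} r) has_real_derivative r s) (at s within {-1..s+1})"
      by (rule integral_has_real_derivative) (use s in \<open>auto intro: continuous_on_subset[OF cont]\<close>)
    moreover have "at s within {-1..s+1} = at s" using s by (intro at_within_Icc_at) auto
    ultimately have "((\<lambda>x. integral {-1..x} r) has_real_derivative r s) (at s)" by simp
    then show ?thesis unfolding R_def by (auto intro!: derivative_eq_intros)
  qed
  have Rc: "isCont R s" if "s > -1" for s using dR[OF that] DERIV_isCont by blast
  have Rcon: "continuous_on {u..v} R" if "u > -1" for u v
    using Rc that by (intro continuous_at_imp_continuous_on) auto
  have Rmono: "R u < R v" if "-1 < u" "u < v" for u v
  proof (rule DERIV_pos_imp_increasing[OF that(2)])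
    fix x assume "u \<le> x" "x \<le> v"
    then have "DERIV R x :> r x" using that by (intro dR) auto
    then show "\<exists>y. DERIV R x :> y \<and> y > 0" using pos[of x] by blast
  qed
  have inj: "inj_on R {-1<..}"
  proof (rule linorder_inj_onI)
    fix u v :: real assume "u < v" "u \<in> {-1<..}" "v \<in> {-1<..}"
    then show "R u \<noteq> R v" using Rmono[of u v] by auto
  qed auto
  have R0: "R 0 = 0" by (simp add: R_def)
  have Rlb: "R s \<ge> s * r0" if "s \<ge> 0" for s
  proof -
    have "(\<lambda>s. R s - s * r0) 0 \<le> (\<lambda>s. R s - s * r0) s"
    proof (rule DERIV_nonneg_imp_increasing_open[OF that])
      fix x assume "0 < x" "x < s"
      then show "\<exists>y. ((\<lambda>s. R s - s * r0) has_real_derivative y) (at x) \<and> 0 \<le> y"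
        using lb[of x] by (intro exI[of _ "r x - r0"]) (auto intro!: derivative_eq_intros dR)
    next
      show "continuous_on {0..s} (\<lambda>s. R s - s * r0)"
        using Rcon[of 0 s] by (intro continuous_intros) auto
    qed
    then show ?thesis using R0 by simp
  qed
  define a where "a = R (-1/2)"
  have a0: "a < 0" using Rmono[of "-1/2" 0] R0 by (simp add: a_def)
  have surj: "y \<in> R ` {-1<..}" if "y > a" for y
  proof (cases "y \<ge> 0")
    case True
    have "\<exists>x. 0 \<le> x \<and> x \<le> y / r0 \<and> R x = y"
      by (rule IVT') (use True R0 Rlb[of "y/r0"] r0 Rcon[of 0 "y/r0"] in auto)
    then show ?thesis by force
  next
    case False
    have "\<exists>x. -1/2 \<le> x \<and> x \<le> 0 \<and> R x = y"
      by (rule IVT') (use False that R0 Rcon[of "-1/2" 0] in \<open>auto simp: a_def\<close>)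
    then show ?thesis by force
  qed
  define g where "g = inv_into {-1<..} R"
  have Rg: "R (g y) = y" if "y > a" for y
    unfolding g_def using surj[OF that] by (rule f_inv_into_f)
  have gR: "g (R s) = s" if "s > -1" for s
    unfolding g_def using inj that by (intro inv_into_f_f) auto
  have gdom: "g y > -1" if "y > a" for y
    unfolding g_def using surj[OF that] by (metis greaterThan_iff inv_into_into)
  have g0: "g 0 = 0" using gR[of 0] R0 by simp
  have gpos: "g t \<ge> 0" if "t \<ge> 0" for t
  proof (rule ccontr)
    assume "\<not> g t \<ge> 0"
    then have "R (g t) < R 0" using gdom[of t] that a0 by (intro Rmono) auto
    then show False using Rg[of t] that a0 R0 by auto
  qed
  have "(g has_real_derivative 1 / r (g t)) (at t)" if t: "t \<ge> 0" for t
  proof -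
    have cg: "isCont g (R (g t))"
    proof (rule isCont_inverse_function[where d="1/4" and f=R and x="g t"])
      fix z assume "\<bar>z - g t\<bar> \<le> 1/4"
      then have z: "z > -1" using gpos[OF t] unfolding abs_le_iff by linarith
      show "g (R z) = z" using z by (rule gR)
      show "isCont R z" using z by (rule Rc)
    qed simp
    have "DERIV g t :> inverse (r (g t))"
    proof (rule DERIV_inverse_function[where f=R and a=a and b="t+1"])
      show "DERIV R (g t) :> r (g t)" using gpos[OF t] by (intro dR) auto
      show "r (g t) \<noteq> 0" using pos[of "g t"] by simp
      show "a < t" "t < t + 1" using a0 t by auto
      show "\<And>y. a < y \<Longrightarrow> y < t + 1 \<Longrightarrow> R (g y) = y" using Rg by auto
      show "isCont g t" using cg Rg[of t] a0 t by simp
    qed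
    then show ?thesis by (simp add: inverse_eq_divide)
  qed
  then show ?thesis using g0 gpos by blast
qed



lemma exist_main:
  fixes a x0 y0 :: real
  assumes a: "a > 1" and x0: "x0 \<noteq> 0" and y0: "y0 \<noteq> 0"
    and hyp: "(a - 1/2) * \<bar>x0\<bar> powr a < (a - 1) * \<bar>y0\<bar>"
  shows "\<exists>\<phi>. fwd_sol (sysf a) (x0, y0) {0..} \<phi>"
proof -
  define al where "al = a - 1"
  define be where "be = a - 1/2"
  define s0 where "s0 = \<bar>x0\<bar> powr a / \<bar>y0\<bar>"
  define ga where "ga = be * s0 / al"
  define w0 where "w0 = \<bar>y0\<bar>"
  have al: "al > 0" and be: "be > 0" and w0: "w0 > 0" using a y0 by (auto simp: al_def be_def w0_def)
  have s0: "s0 > 0" using x0 y0 by (simp add: s0_def)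
  have ga0: "ga > 0" using al be s0 by (simp add: ga_def)
  have ga1: "ga < 1"
  proof -
    have "be * \<bar>x0\<bar> powr a < al * \<bar>y0\<bar>" using hyp by (simp add: al_def be_def)
    then have "be * s0 < al" using y0 by (simp add: s0_def field_simps)
    then show ?thesis using al by (simp add: ga_def)
  qed
  define D where "D = (\<lambda>s. (1 - ga) * exp (al * s) + ga)"
  define S where "S = (\<lambda>s. (al * s - ln (D s)) / be)"
  define W where "W = (\<lambda>s. w0 * exp (S s / 2 - s))"
  define X where "X = (\<lambda>s. \<bar>x0\<bar> * exp ((S s / 2 - s - ln (D s)) / a))"
  have Dpos: "D s > 0" for s using ga0 ga1 by (simp add: D_def add_pos_pos)
  have Wpos: "W s > 0" for s using w0 by (simp add: W_def)
  have Xpos: "X s > 0" for s using x0 by (simp add: X_def)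
  have e1: "al * ga = be * s0" using al by (simp add: ga_def)
  have ED: "(1 - ga) * al * exp (al * s) / D s = al - be * s0 / D s" for s
  proof -
    have "al * D s - (1 - ga) * al * exp (al * s) = be * s0" by (simp add: D_def algebra_simps e1)
    then show ?thesis using Dpos[of s] by (simp add: field_simps)
  qed
  have dD: "DERIV D s :> (1 - ga) * al * exp (al * s)" for s
    unfolding D_def by (auto intro!: derivative_eq_intros)
  have dS: "DERIV S s :> s0 / D s" for s
  proof -
    have "DERIV S s :> (al - (1 - ga) * al * exp (al * s) / D s) / be"
      unfolding S_def using Dpos[of s] be by (auto intro!: derivative_eq_intros dD)
    moreover have "(al - (1 - ga) * al * exp (al * s) / D s) / be = s0 / D s"
      using Dpos[of s] be by (simp only: ED) simp
    ultimately show ?thesis by simp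
  qed
  have dW: "DERIV W s :> W s * (s0 / D s / 2 - 1)" for s
    unfolding W_def by (auto intro!: derivative_eq_intros dS simp: algebra_simps)
  have dX: "DERIV X s :> X s * (s0 / D s - 1)" for s
  proof -
    have dQ: "DERIV (\<lambda>s. (S s / 2 - s - ln (D s)) / a) s :> (s0 / D s / 2 - 1 - (1 - ga) * al * exp (al * s) / D s) / a"
      using Dpos[of s] a by (auto intro!: derivative_eq_intros dS dD)
    have "DERIV X s :> \<bar>x0\<bar> * (exp ((S s / 2 - s - ln (D s)) / a) * ((s0 / D s / 2 - 1 - (1 - ga) * al * exp (al * s) / D s) / a))"
      unfolding X_def by (intro DERIV_cmult DERIV_fun_exp dQ)
    then have "DERIV X s :> X s * ((s0 / D s / 2 - 1 - (1 - ga) * al * exp (al * s) / D s) / a)"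
      by (simp add: X_def mult.assoc)
    moreover have "(s0 / D s / 2 - 1 - (1 - ga) * al * exp (al * s) / D s) / a = s0 / D s - 1"
      using Dpos[of s] a by (simp only: ED) (simp add: al_def be_def field_simps)
    ultimately show ?thesis by metis
  qed
  have key: "X s powr a = s0 / D s * W s" for s
  proof -
    have "X s powr a = \<bar>x0\<bar> powr a * exp (S s / 2 - s - ln (D s))"
      using x0 a by (simp add: X_def powr_mult exp_powr_real powr_def[of "exp _"])
    also have "\<dots> = \<bar>x0\<bar> powr a * exp (S s / 2 - s) / D s"
      using Dpos[of s] by (simp add: exp_diff)
    also have "\<dots> = s0 / D s * W s" using y0 by (simp add: s0_def W_def w0_def)
    finally show ?thesis .
  qed
  have Wle: "W s \<le> w0" if s: "s \<ge> 0" for s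
  proof -
    have "exp (al * s) \<ge> 1" using al s by simp
    then have "(1 - ga) * 1 \<le> (1 - ga) * exp (al * s)" using ga1 by (intro mult_left_mono) auto
    then have "D s \<ge> 1" by (simp add: D_def)
    then have "ln (D s) \<ge> 0" by simp
    then have "S s \<le> al * s / be" using be by (simp add: S_def divide_right_mono)
    also have "\<dots> \<le> s" using al be s by (simp add: al_def be_def field_simps)
    finally have "S s / 2 - s \<le> 0" using s by simp
    then show ?thesis using w0 by (simp add: W_def mult_le_cancel_left1 exp_le_one_iff)
  qed
  have cW: "isCont W s" for s using dW[of s] by (rule DERIV_isCont)
  have "continuous_on UNIV (\<lambda>s. 1 / W s)"
    by (rule continuous_at_imp_continuous_on) (use cW Wpos in \<open>auto intro!: isCont_divide simp: less_imp_neq[OF Wpos, symmetric]\<close>)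
  moreover have "1 / W s > 0" for s using Wpos[of s] by simp
  moreover have "1 / w0 > 0" using w0 by simp
  moreover have "1 / W s \<ge> 1 / w0" if "s \<ge> 0" for s using Wle[OF that] Wpos[of s] by (simp add: frac_le)
  ultimately obtain g where g0: "g 0 = 0"
      and gd: "\<And>t. t \<ge> 0 \<Longrightarrow> (g has_real_derivative 1 / (1 / W (g t))) (at t)"
    using time_change[of "\<lambda>s. 1 / W s" "1 / w0"] by blast
  define \<phi> where "\<phi> = (\<lambda>t. (sgn x0 * X (g t), sgn y0 * W (g t)))"
  have D0: "D 0 = 1" by (simp add: D_def)
  have "\<phi> 0 = (x0, y0)" using x0 y0 by (simp add: \<phi>_def g0 X_def W_def S_def D0 w0_def sgn_mult_abs)
  moreover have "(\<phi> has_vector_derivative sysf a (\<phi> t)) (at t within {0..})" if t: "t \<in> {0..}" for t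
  proof -
    have gd': "DERIV g t :> W (g t)" using gd[of t] t by simp
    have d1: "DERIV (\<lambda>t. sgn x0 * X (g t)) t :> sgn x0 * (X (g t) * (s0 / D (g t) - 1) * W (g t))"
      by (intro DERIV_cmult DERIV_chain2[OF dX gd'])
    have d2: "DERIV (\<lambda>t. sgn y0 * W (g t)) t :> sgn y0 * (W (g t) * (s0 / D (g t) / 2 - 1) * W (g t))"
      by (intro DERIV_cmult DERIV_chain2[OF dW gd'])
    have "(\<phi> has_vector_derivative (sgn x0 * (X (g t) * (s0 / D (g t) - 1) * W (g t)),
        sgn y0 * (W (g t) * (s0 / D (g t) / 2 - 1) * W (g t)))) (at t)"
      unfolding \<phi>_def using d1 d2
      by (intro has_vector_derivative_Pair) (simp_all add: has_real_derivative_iff_has_vector_derivative)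
    moreover have "(sgn x0 * (X (g t) * (s0 / D (g t) - 1) * W (g t)),
        sgn y0 * (W (g t) * (s0 / D (g t) / 2 - 1) * W (g t))) = sysf a (\<phi> t)"
    proof -
      have ax: "\<bar>sgn x0 * X (g t)\<bar> = X (g t)" using x0 Xpos[of "g t"] by (auto simp: abs_mult sgn_if)
      have ay: "\<bar>sgn y0 * W (g t)\<bar> = W (g t)" using y0 Wpos[of "g t"] by (auto simp: abs_mult sgn_if)
      show ?thesis unfolding \<phi>_def sysf_def using ax ay key[of "g t"] by (simp add: algebra_simps)
    qed
    ultimately show ?thesis by (simp add: has_vector_derivative_at_within)
  qed
  ultimately show ?thesis unfolding fwd_sol_def by blast
qed





lemma exist_axis:
  fixes a y0 :: real
  assumes y0: "y0 \<noteq> 0"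
  shows "\<exists>\<phi>. fwd_sol (sysf a) (0, y0) {0..} \<phi>"
proof -
  define \<phi> where "\<phi> = (\<lambda>t::real. (0::real, y0 / (1 + \<bar>y0\<bar> * t)))"
  have "(\<phi> has_vector_derivative sysf a (\<phi> t)) (at t within {0..})" if t: "t \<in> {0..}" for t
  proof -
    have pos: "1 + \<bar>y0\<bar> * t > 0" using t by (simp add: add_pos_nonneg)
    have "DERIV (\<lambda>t. y0 / (1 + \<bar>y0\<bar> * t)) t :> - (y0 * \<bar>y0\<bar>) / (1 + \<bar>y0\<bar> * t)^2"
      using pos by (auto intro!: derivative_eq_intros simp: power2_eq_square)
    then have "(\<phi> has_vector_derivative (0, - (y0 * \<bar>y0\<bar>) / (1 + \<bar>y0\<bar> * t)^2)) (at t)"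
      unfolding \<phi>_def by (intro has_vector_derivative_Pair) (simp_all add: has_real_derivative_iff_has_vector_derivative)
    moreover have "(0, - (y0 * \<bar>y0\<bar>) / (1 + \<bar>y0\<bar> * t)^2) = sysf a (\<phi> t)"
      using pos by (simp add: \<phi>_def sysf_def abs_divide power2_eq_square)
    ultimately show ?thesis by (simp add: has_vector_derivative_at_within)
  qed
  moreover have "\<phi> 0 = (0, y0)" by (simp add: \<phi>_def)
  ultimately show ?thesis unfolding fwd_sol_def by blast
qed

lemma fwd_sol_restrict:
  assumes "fwd_sol f p {0..} \<phi>" "T \<ge> 0"
  shows "fwd_sol f p {0..T} \<phi>"
proof -
  have "(\<phi> has_vector_derivative f (\<phi> t)) (at t within {0..T})" if "t \<in> {0..T}" for t
  proof (rule has_vector_derivative_within_subset)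
    show "(\<phi> has_vector_derivative f (\<phi> t)) (at t within {0..})" using assms that by (auto simp: fwd_sol_def)
  qed auto
  then show ?thesis using assms by (auto simp: fwd_sol_def)
qed

lemma lim_aux: "((\<lambda>t::real. sqrt (k / t)) \<longlongrightarrow> 0) at_top"
proof -
  have "((\<lambda>t::real. k / t) \<longlongrightarrow> 0) at_top"
    by (intro tendsto_divide_0[OF tendsto_const] filterlim_at_top_imp_at_infinity filterlim_ident)
  then have "((\<lambda>t::real. sqrt (k / t)) \<longlongrightarrow> sqrt 0) at_top" by (intro tendsto_intros)
  then show ?thesis by simp
qed

lemma decay:
  fixes a c :: real
  assumes a: "a > 1" and c1: "c \<ge> 1" and cc: "a - 1/2 \<le> c * (a - 1)"
    and sol: "fwd_sol (sysf a) p {0..} \<phi>" and pN: "c * \<bar>fst p\<bar> powr a < \<bar>snd p\<bar>"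
  shows "(\<phi> \<longlongrightarrow> 0) at_top"
proof -
  define k where "k = \<bar>snd p\<bar>"
  define h where "h = (\<lambda>t::real. sqrt (k / t))"
  have y0: "snd p \<noteq> 0" using pN c1 by (auto simp: mult_less_0_iff)
  have bnd: "norm (\<phi> t) \<le> h t powr (1/a) + h t" if t: "t > 0" for t
  proof -
    have sol': "fwd_sol (sysf a) p {0..t} \<phi>" using sol t by (intro fwd_sol_restrict) auto
    from apriori[OF a c1 cc sol' pN, of t] t
    have inN: "c * \<bar>fst (\<phi> t)\<bar> powr a < \<bar>snd (\<phi> t)\<bar>"
      and yi: "1 / (snd p)^2 + t / \<bar>snd p\<bar> \<le> 1 / (snd (\<phi> t))^2" by auto
    define u where "u = fst (\<phi> t)"
    define v where "v = snd (\<phi> t)"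
    have vnz: "v \<noteq> 0" using inN c1 by (auto simp: v_def mult_less_0_iff)
    have "t / k \<le> 1 / v^2" using yi y0 by (simp add: k_def v_def) (smt (verit) zero_le_divide_1_iff zero_le_power2)
    then have "v^2 \<le> k / t" using vnz t y0 by (simp add: k_def field_simps)
    then have vh: "\<bar>v\<bar> \<le> h t" unfolding h_def by (metis real_sqrt_abs real_sqrt_le_mono)
    have "\<bar>u\<bar> powr a \<le> \<bar>v\<bar>" using inN cge[OF c1, of "\<bar>u\<bar>" a] by (simp add: u_def v_def)
    then have "(\<bar>u\<bar> powr a) powr (1/a) \<le> \<bar>v\<bar> powr (1/a)" using a by (intro powr_mono2) auto
    moreover have "(\<bar>u\<bar> powr a) powr (1/a) = \<bar>u\<bar>" using a by (simp add: powr_powr)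
    ultimately have "\<bar>u\<bar> \<le> \<bar>v\<bar> powr (1/a)" by simp
    also have "\<dots> \<le> h t powr (1/a)" using vh a by (intro powr_mono2) auto
    finally have uh: "\<bar>u\<bar> \<le> h t powr (1/a)" .
    have "norm (\<phi> t) = norm (u, v)" by (simp add: u_def v_def)
    also have "\<dots> \<le> \<bar>u\<bar> + \<bar>v\<bar>" by (simp add: norm_Pair sqrt_sum_squares_le_sum_abs)
    finally show ?thesis using uh vh by simp
  qed
  have hl: "(h \<longlongrightarrow> 0) at_top" unfolding h_def by (rule lim_aux)
  have "((\<lambda>t. h t powr (1/a) + h t) \<longlongrightarrow> 0 + 0) at_top"
  proof -
    have ev: "eventually (\<lambda>t. 0 \<le> h t) at_top"
      using eventually_ge_at_top[of "0::real"] by eventually_elim (simp add: h_def k_def)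
    have "((\<lambda>t. h t powr (1/a)) \<longlongrightarrow> 0) at_top"
      using a by (intro tendsto_zero_powrI[OF hl tendsto_const ev]) auto
    then show ?thesis by (intro tendsto_add hl)
  qed
  then have gl: "((\<lambda>t. h t powr (1/a) + h t) \<longlongrightarrow> 0) at_top" by simp
  have evb: "eventually (\<lambda>t. norm (\<phi> t) \<le> h t powr (1/a) + h t) at_top"
    using eventually_gt_at_top[of "0::real"] by eventually_elim (rule bnd)
  show ?thesis by (rule Lim_null_comparison[OF evb gl])
qed



theorem corollary2:
  fixes a :: real
  assumes "a > 1"
  shows "ess_as_stable (sysf a) {0}"
proof -
  define c where "c = (a - 1/2) / (a - 1)"
  have c1: "c \<ge> 1" using assms by (simp add: c_def field_simps)
  have cc: "a - 1/2 \<le> c * (a - 1)" using assms by (simp add: c_def)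
  have c0: "c > 0" using c1 by simp
  define N where "N = {p::real\<times>real. c * \<bar>fst p\<bar> powr a < \<bar>snd p\<bar>}"
  have stab: "as_stable_rel (sysf a) {0} N"
    unfolding as_stable_rel_def
  proof (intro conjI allI impI)
    fix U :: "(real \<times> real) set" assume "nbhd {0} U"
    then obtain G :: "(real \<times> real) set" where G: "open G" "{0} \<subseteq> G" "G \<subseteq> U" by (auto simp: nbhd_def)
    then obtain r where r: "r > 0" "ball 0 r \<subseteq> G" using open_contains_ball by blast
    show "\<exists>V. nbhd {0} V \<and> (\<forall>p\<in>V \<inter> N. \<forall>T\<ge>0. \<forall>\<phi>. fwd_sol (sysf a) p {0..T} \<phi> \<longrightarrow> \<phi> ` {0..T} \<subseteq> U)"
    proof (intro exI[of _ "ball 0 r"] conjI ballI allI impI)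
      show "nbhd {0} (ball 0 r)" unfolding nbhd_def using r by (intro exI[of _ "ball 0 r"]) auto
      fix p T \<phi> assume p: "p \<in> ball 0 r \<inter> N" and T: "T \<ge> 0" and sol: "fwd_sol (sysf a) p {0..T} \<phi>"
      show "\<phi> ` {0..T} \<subseteq> U"
      proof
        fix z assume "z \<in> \<phi> ` {0..T}"
        then obtain t where t: "t \<in> {0..T}" "z = \<phi> t" by auto
        have pN: "c * \<bar>fst p\<bar> powr a < \<bar>snd p\<bar>" using p by (simp add: N_def)
        from apriori[OF assms c1 cc sol pN t(1)]
        have "(fst (\<phi> t))^2 \<le> (fst p)^2" "(snd (\<phi> t))^2 \<le> (snd p)^2" by auto
        then have "norm (\<phi> t) \<le> norm p"
          by (simp add: norm_prod_def real_sqrt_le_mono add_mono)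
        then have "\<phi> t \<in> ball 0 r" using p by simp
        then show "z \<in> U" using t r G by auto
      qed
    qed
  next
    show "\<exists>W. nbhd {0} W \<and> (\<forall>p\<in>W \<inter> N. (\<exists>\<phi>. fwd_sol (sysf a) p {0..} \<phi>) \<and>
        (\<forall>\<phi>. fwd_sol (sysf a) p {0..} \<phi> \<longrightarrow> omega_limit \<phi> \<subseteq> {0}))"
    proof (intro exI[of _ UNIV] conjI ballI allI impI)
      show "nbhd {0} UNIV" by (auto simp: nbhd_def)
      fix p assume "p \<in> UNIV \<inter> N"
      then have pN: "c * \<bar>fst p\<bar> powr a < \<bar>snd p\<bar>" by (simp add: N_def)
      obtain x0 y0 where p: "p = (x0, y0)" by force
      have y0: "y0 \<noteq> 0" using pN c1 p by (auto simp: mult_less_0_iff)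
      show "\<exists>\<phi>. fwd_sol (sysf a) p {0..} \<phi>"
      proof (cases "x0 = 0")
        case True
        then show ?thesis using exist_axis[OF y0] p by simp
      next
        case False
        have "(a - 1) * (c * \<bar>x0\<bar> powr a) < (a - 1) * \<bar>y0\<bar>"
          using pN p assms by (intro mult_strict_left_mono) auto
        then have "(a - 1/2) * \<bar>x0\<bar> powr a < (a - 1) * \<bar>y0\<bar>"
          using assms by (simp add: c_def)
        then show ?thesis using exist_main[OF assms False y0] p by simp
      qed
      fix \<phi> assume sol: "fwd_sol (sysf a) p {0..} \<phi>"
      have lim: "(\<phi> \<longlongrightarrow> 0) at_top" by (rule decay[OF assms c1 cc sol pN])
      show "omega_limit \<phi> \<subseteq> {0}"
      proof
        fix q assume "q \<in> omega_limit \<phi>"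
        then obtain s :: "nat \<Rightarrow> real" where s: "filterlim s at_top sequentially" and sq: "((\<phi> \<circ> s) \<longlongrightarrow> q) sequentially"
          by (auto simp: omega_limit_def)
        have "((\<lambda>n. \<phi> (s n)) \<longlongrightarrow> 0) sequentially" by (rule filterlim_compose[OF lim s])
        then have "((\<phi> \<circ> s) \<longlongrightarrow> 0) sequentially" by (simp add: comp_def)
        then have "q = 0" using sq by (rule LIMSEQ_unique[rotated])
        then show "q \<in> {0}" by simp
      qed
    qed
  qed
  have mp1: "N \<in> sets lebesgue" unfolding N_def by (rule measure_part(1)[OF assms c0])
  have mp2: "((\<lambda>e. measure lebesgue (eps_nbhd {0} e \<inter> N) / measure lebesgue (eps_nbhd {0::real\<times>real} e)) \<longlongrightarrow> 1) (at_right 0)"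
    unfolding N_def by (rule measure_part(2)[OF assms c0])
  show ?thesis unfolding ess_as_stable_def using mp1 mp2 stab by blast
qed


end
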